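(* Let $A\in(0,1)$, $M<0$, $Q>0$, $S>0$ and consider the planar system $$\frac{du}{d\tau}=u^2\big((u+A)(1-u)(u-M)-Qv\big),\qquad \frac{dv}{d\tau}=S(u+A)(u-v)v .$$ Put $T=1-A+M$. (a) If $T^3<-27AM$, then no positive equilibrium $(\tilde u,\tilde u)$, $\tilde u>0$, of the system is a saddle. (b) If a positive equilibrium $(\tilde u,\tilde u)$ satisfies $\tilde u>T+\sqrt{T^2+3(A-M+AM)}$, then it is not a repeller.
   Context: The positive equilibria of the system are exactly the points $(u,u)$ with $u>0$ and $(u+A)(1-u)(u-M)=Qu$. *)

theory Defs
  imports "HOL-Analysis.Analysis"
begin

definition Fu :: "real \<Rightarrow> real \<Rightarrow> real \<Rightarrow> real \<Rightarrow> real \<Rightarrow> real" where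
  "Fu A M Q u v = u^2 * ((u + A) * (1 - u) * (u - M) - Q * v)"

definition Fv :: "real \<Rightarrow> real \<Rightarrow> real \<Rightarrow> real \<Rightarrow> real" where
  "Fv A S u v = S * (u + A) * (u - v) * v"

definition is_equilibrium :: "real \<Rightarrow> real \<Rightarrow> real \<Rightarrow> real \<Rightarrow> real \<Rightarrow> real \<Rightarrow> bool" where
  "is_equilibrium A M Q S u v \<longleftrightarrow> Fu A M Q u v = 0 \<and> Fv A S u v = 0"

definition J11 :: "real \<Rightarrow> real \<Rightarrow> real \<Rightarrow> real \<Rightarrow> real \<Rightarrow> real" where
  "J11 A M Q u v = deriv (\<lambda>x. Fu A M Q x v) u"
definition J12 :: "real \<Rightarrow> real \<Rightarrow> real \<Rightarrow> real \<Rightarrow> real \<Rightarrow> real" where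
  "J12 A M Q u v = deriv (\<lambda>y. Fu A M Q u y) v"
definition J21 :: "real \<Rightarrow> real \<Rightarrow> real \<Rightarrow> real \<Rightarrow> real" where
  "J21 A S u v = deriv (\<lambda>x. Fv A S x v) u"
definition J22 :: "real \<Rightarrow> real \<Rightarrow> real \<Rightarrow> real \<Rightarrow> real" where
  "J22 A S u v = deriv (\<lambda>y. Fv A S u y) v"

definition jac_eigenvalue :: "real \<Rightarrow> real \<Rightarrow> real \<Rightarrow> real \<Rightarrow> real \<Rightarrow> real \<Rightarrow> complex \<Rightarrow> bool" where
  "jac_eigenvalue A M Q S u v z \<longleftrightarrow>
     (complex_of_real (J11 A M Q u v) - z) * (complex_of_real (J22 A S u v) - z)
       - complex_of_real (J12 A M Q u v) * complex_of_real (J21 A S u v) = 0"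

definition is_saddle :: "real \<Rightarrow> real \<Rightarrow> real \<Rightarrow> real \<Rightarrow> real \<Rightarrow> real \<Rightarrow> bool" where
  "is_saddle A M Q S u v \<longleftrightarrow> is_equilibrium A M Q S u v \<and>
     (\<exists>l1 l2 :: real. l1 < 0 \<and> 0 < l2 \<and>
        jac_eigenvalue A M Q S u v (complex_of_real l1) \<and>
        jac_eigenvalue A M Q S u v (complex_of_real l2))"

definition is_repeller :: "real \<Rightarrow> real \<Rightarrow> real \<Rightarrow> real \<Rightarrow> real \<Rightarrow> real \<Rightarrow> bool" where
  "is_repeller A M Q S u v \<longleftrightarrow> is_equilibrium A M Q S u v \<and>
     (\<forall>z. jac_eigenvalue A M Q S u v z \<longrightarrow> Re z > 0)"

end

theory Submission
  imports Defs
begin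

lemma J11_eq: "J11 A M Q u v = 2*u*((u + A) * (1 - u) * (u - M) - Q * v)
   + u^2 * (-3*u^2 + 2*(1-A+M)*u + (A - M + A*M))"
  unfolding J11_def Fu_def
  apply (rule DERIV_imp_deriv)
  apply (rule derivative_eq_intros refl | simp)+
  apply (simp add: algebra_simps power2_eq_square)
  done

lemma J12_eq: "J12 A M Q u v = - Q * u^2"
  unfolding J12_def Fu_def
  apply (rule DERIV_imp_deriv)
  apply (rule derivative_eq_intros refl | simp)+
  done

lemma J21_eq: "J21 A S u v = S * ((u - v) * v + (u + A) * v)"
  unfolding J21_def Fv_def
  apply (rule DERIV_imp_deriv)
  apply (rule derivative_eq_intros refl | simp)+
  apply (simp add: algebra_simps)
  done

lemma J22_eq: "J22 A S u v = S * (u + A) * (u - 2 * v)"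
  unfolding J22_def Fv_def
  apply (rule DERIV_imp_deriv)
  apply (rule derivative_eq_intros refl | simp)+
  apply (simp add: algebra_simps)
  done

lemma vieta:
  fixes a b c d l1 l2 :: real
  assumes "(a - l1) * (d - l1) - b * c = 0" "(a - l2) * (d - l2) - b * c = 0" "l1 < 0" "0 < l2"
  shows "a * d - b * c < 0"
proof -
  have "(l2 - l1) * (l1 + l2 - a - d) = 0" using assms(1,2) by (simp add: algebra_simps power2_eq_square)
  hence s: "l1 + l2 = a + d" using assms(3,4) by simp
  have "a*d - b*c = a*d - (a-l1)*(d-l1)" using assms(1) by simp
  also have "... = l1*(a+d) - l1*l1" by (simp add: algebra_simps)
  also have "... = l1 * l2" using s[symmetric] by (simp add: algebra_simps)
  finally have "a*d - b*c = l1 * l2" .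
  thus ?thesis using assms(3,4) by (simp add: mult_neg_pos)
qed

lemma exists_low_root:
  fixes a b c d :: real
  assumes "a + d < 0"
  shows "\<exists>z. (complex_of_real a - z) * (complex_of_real d - z) - complex_of_real b * complex_of_real c = 0 \<and> Re z \<le> 0"
proof -
  define t where "t = complex_of_real (a + d)"
  define p where "p = complex_of_real (a*d - b*c)"
  define w where "w = csqrt (t^2/4 - p)"
  have w2: "w^2 = t^2/4 - p" unfolding w_def by simp
  have root: "\<And>z. z - t/2 = w \<or> z - t/2 = -w \<Longrightarrow> (complex_of_real a - z) * (complex_of_real d - z) - complex_of_real b * complex_of_real c = 0"
  proof -
    fix z assume "z - t/2 = w \<or> z - t/2 = -w"
    hence "(z - t/2)^2 = t^2/4 - p" using w2 by auto
    thus "(complex_of_real a - z) * (complex_of_real d - z) - complex_of_real b * complex_of_real c = 0"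
      unfolding t_def p_def by (simp add: algebra_simps power2_eq_square)
  qed
  have "Re (t/2 + w) + Re (t/2 - w) = a + d" unfolding t_def by simp
  hence "Re (t/2 + w) \<le> 0 \<or> Re (t/2 - w) \<le> 0" using assms by linarith
  thus ?thesis using root[of "t/2 + w"] root[of "t/2 - w"] by force
qed

theorem corollary1:
  fixes A M Q S :: real
  assumes "0 < A" and "A < 1" and "M < 0" and "Q > 0" and "S > 0"
  defines "T \<equiv> 1 - A + M"
  shows "(T ^ 3 < - 27 * A * M \<longrightarrow>
           (\<forall>u > 0. is_equilibrium A M Q S u u \<longrightarrow> \<not> is_saddle A M Q S u u))
       \<and> (\<forall>u > 0. is_equilibrium A M Q S u u \<and> u > T + sqrt (T ^ 2 + 3 * (A - M + A * M))
           \<longrightarrow> \<not> is_repeller A M Q S u u)"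
proof (intro conjI impI allI)
  fix u :: real
  assume T3: "T ^ 3 < - 27 * A * M" and u: "u > 0" and eq: "is_equilibrium A M Q S u u"
  have equ: "(u + A) * (1 - u) * (u - M) = Q * u"
    using eq u assms unfolding is_equilibrium_def Fu_def by simp
  have h: "-2*u^3 + T*u^2 + A*M < 0"
  proof (cases "T \<le> 0")
    case True
    have "T*u^2 \<le> 0" using True by (simp add: mult_nonpos_nonneg)
    moreover have "A*M < 0" using assms by (simp add: mult_pos_neg)
    moreover have "u^3 > 0" using u by simp
    ultimately show ?thesis by linarith
  next
    case False
    have "-2*u^3 + T*u^2 \<le> T^3/27"
    proof -
      have "T^3/27 - (-2*u^3 + T*u^2) = (u - T/3)^2 * (2*u + T/3)"
        by (simp add: algebra_simps power2_eq_square power3_eq_cube)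
      moreover have "(u - T/3)^2 * (2*u + T/3) \<ge> 0" using False u by simp
      ultimately show ?thesis by linarith
    qed
    thus ?thesis using T3 by linarith
  qed
  show "\<not> is_saddle A M Q S u u"
  proof
    assume "is_saddle A M Q S u u"
    then obtain l1 l2 :: real where l: "l1 < 0" "0 < l2"
      "jac_eigenvalue A M Q S u u (complex_of_real l1)"
      "jac_eigenvalue A M Q S u u (complex_of_real l2)"
      unfolding is_saddle_def by blast
    let ?a = "J11 A M Q u u" and ?b = "J12 A M Q u u" and ?c = "J21 A S u u" and ?d = "J22 A S u u"
    have e1: "(?a - l1) * (?d - l1) - ?b * ?c = 0"
      using l(3) unfolding jac_eigenvalue_def
      by (metis (no_types, opaque_lifting) of_real_diff of_real_mult of_real_eq_0_iff)
    have e2: "(?a - l2) * (?d - l2) - ?b * ?c = 0"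
      using l(4) unfolding jac_eigenvalue_def
      by (metis (no_types, opaque_lifting) of_real_diff of_real_mult of_real_eq_0_iff)
    have neg: "?a * ?d - ?b * ?c < 0" using vieta[OF e1 e2 l(1,2)] .
    define fp where "fp = -3*u^2 + 2*T*u + (A - M + A*M)"
    have det: "?a * ?d - ?b * ?c = S * u^3 * (u + A) * (Q - fp)"
    proof -
      have ha: "?a = u^2 * fp" unfolding J11_eq fp_def T_def using equ by simp
      have hc: "?c = S * (u + A) * u" unfolding J21_eq by (simp add: algebra_simps)
      have hd: "?d = - (S * (u + A) * u)" unfolding J22_eq by (simp add: algebra_simps)
      have "?a * ?d - ?b * ?c = u^2 * fp * (- (S * (u + A) * u)) - (- Q * u^2) * (S * (u + A) * u)"
        by (simp only: ha hc hd J12_eq)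
      also have "... = S * u^3 * (u + A) * (Q - fp)"
        by (simp add: algebra_simps power2_eq_square power3_eq_cube)
      finally show ?thesis .
    qed
    have "u * (Q - fp) = -(-2*u^3 + T*u^2 + A*M)"
      using equ unfolding fp_def T_def by (simp add: algebra_simps power2_eq_square power3_eq_cube)
    hence "u * (Q - fp) > 0" using h by linarith
    hence "Q - fp > 0" using u by (simp add: zero_less_mult_iff)
    hence "S * u^3 * (u + A) * (Q - fp) > 0" using u assms by simp
    hence "?a * ?d - ?b * ?c > 0" using det by simp
    thus False using neg by linarith
  qed
next
  fix u :: real
  assume u0: "0 < u" and "is_equilibrium A M Q S u u \<and> u > T + sqrt (T ^ 2 + 3 * (A - M + A * M))"
  hence u: "u > 0" and eq: "is_equilibrium A M Q S u u"
    and ub: "u > T + sqrt (T ^ 2 + 3 * (A - M + A * M))" by auto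
  define B where "B = A - M + A*M"
  define s where "s = sqrt (T^2 + 3*B)"
  have "(-M)*(1-A) > 0" using assms by (simp add: mult_neg_pos)
  moreover have "B = A + (-M)*(1-A)" unfolding B_def by (simp add: algebra_simps)
  ultimately have Bpos: "B > 0" using assms by linarith
  have "T^2 \<ge> 0" by simp
  hence "T^2 + 3*B \<ge> 0" using Bpos by linarith
  hence s2: "s^2 = T^2 + 3*B" and s0: "s \<ge> 0" unfolding s_def by simp_all
  have sT: "s > \<bar>T\<bar>"
  proof (rule power2_less_imp_less)
    show "\<bar>T\<bar>^2 < s^2" using s2 Bpos by simp
  qed (rule s0)
  have uq: "u > T + s" using ub unfolding s_def B_def by simp
  have Ts: "T + s > 0" using sT abs_ge_minus_self[of T] by linarith
  have r: "u > (T + s)/3" using uq Ts by (simp add: field_simps)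
  have r': "u > (T - s)/3" using r s0 by (simp add: field_simps)
  have fneg: "-3*u^2 + 2*T*u + B < 0"
  proof -
    have "-3*u^2 + 2*T*u + B = -3 * (u - (T+s)/3) * (u - (T-s)/3)"
    proof -
      have "-3 * (u - (T+s)/3) * (u - (T-s)/3) = -3*u^2 + 2*T*u + (s^2 - T^2)/3"
        by (simp add: field_simps power2_eq_square)
      thus ?thesis using s2 by simp
    qed
    moreover have "(u - (T+s)/3) * (u - (T-s)/3) > 0" using r r' by simp
    ultimately show ?thesis by linarith
  qed
  have equ: "(u + A) * (1 - u) * (u - M) = Q * u"
    using eq u assms unfolding is_equilibrium_def Fu_def by simp
  have tr: "J11 A M Q u u + J22 A S u u < 0"
  proof -
    have "J11 A M Q u u = u^2 * (-3*u^2 + 2*T*u + B)"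
      unfolding J11_eq T_def B_def using equ by simp
    moreover have "u^2 * (-3*u^2 + 2*T*u + B) < 0" using fneg u by (simp add: mult_pos_neg)
    moreover have "J22 A S u u < 0" unfolding J22_eq using u assms
      by (simp add: mult_pos_neg)
    ultimately show ?thesis by linarith
  qed
  obtain z where "jac_eigenvalue A M Q S u u z" "Re z \<le> 0"
    using exists_low_root[OF tr, of "J12 A M Q u u" "J21 A S u u"] unfolding jac_eigenvalue_def by blast
  thus "\<not> is_repeller A M Q S u u" unfolding is_repeller_def by force
qed

end
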